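(* Let $\mathcal{M}=(\Sigma,\Gamma,\mathcal{H},U,M)$ be a QMM, $\rho$ a Hermitian operator on $\mathcal{H}$, and $m,k\in\mathbb{N}$. If $\operatorname{span}\mathfrak{D}_l(\rho,m)=\operatorname{span}\mathfrak{D}_l(\rho,m+1)$ for every $0\le l\le k$, then $\operatorname{span}\mathfrak{D}_l(\rho,m)=\operatorname{span}\mathfrak{D}_l(\rho,m+\delta)$ for every $0\le l\le k$ and every $\delta\in\mathbb{N}$.
   Context: A quantum Mealy machine (QMM) is a tuple $\mathcal{M}=(\Sigma,\Gamma,\mathcal{H},U,M)$ where $\Sigma,\Gamma$ are finite alphabets, $\mathcal{H}$ a finite-dimensional complex Hilbert space, $U=\{U_\sigma\}_{\sigma\in\Sigma}$ unitary operators on $\mathcal{H}$, $M=\{M_\gamma\}_{\gamma\in\Gamma}$ linear operators with $\sum_\gamma M_\gamma^\dagger M_\gamma=I$. For a word $a$, $|a|$ is its length, $a[l:r]=a[l]\cdots a[r]$ (empty if $l>r$), $U_a=U_{a[|a|]}\cdots U_{a[1]}$, $U_\epsilon=I$. A scheduler for $a\in\Sigma^*$ is a finite non-decreasing integer sequence $\mathcal{S}=(s_1\le\dots\le s_{|\mathcal{S}|})$ in $\{0,\dots,|a|\}$ (possibly empty); $\mathfrak{S}_a$ is the set of schedulers for $a$. With $s_0=0$, $s_{|\mathcal{S}|+1}=|a|$, $a_i=a[s_{i-1}+1:s_i]$. For $b\in\Gamma^{|\mathcal{S}|}$, $V_{b|a,\mathcal{S}}=U_{a_{|\mathcal{S}|+1}}M_{b_{|\mathcal{S}|}}U_{a_{|\mathcal{S}|}}\cdots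 M_{b_1}U_{a_1}$ and $\rho^{\mathcal{M}}_{b|a,\mathcal{S}}=V_{b|a,\mathcal{S}}\rho V_{b|a,\mathcal{S}}^\dagger$. For a Hermitian $\rho$ and $k,m\in\mathbb{N}$, $\mathfrak{D}_k(\rho,m)=\{\rho^{\mathcal{M}}_{b|a,\mathcal{S}}: a\in\Sigma^*,\mathcal{S}\in\mathfrak{S}_a,b\in\Gamma^{|\mathcal{S}|},|a|+|\mathcal{S}|\le m,|\mathcal{S}|\le k\}$; spans are complex linear spans in the space of operators on $\mathcal{H}$. *)

theory Defs
  imports "Jordan_Normal_Form.Schur_Decomposition" "Jordan_Normal_Form.VS_Connect"
begin

text \<open>Operators on the d-dimensional Hilbert space C^d are d x d complex matrices.
  Input letters have type 's, output letters type 'g (both finite types).\<close>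

text \<open>U_a = U_{a[|a|]} ... U_{a[1]}, U_epsilon = I.\<close>
fun U_word :: "nat \<Rightarrow> ('s \<Rightarrow> complex mat) \<Rightarrow> 's list \<Rightarrow> complex mat" where
  "U_word d U [] = 1\<^sub>m d"
| "U_word d U (\<sigma> # a) = U_word d U a * U \<sigma>"

text \<open>V_aux d U M a p S b computes U_{a_{j+1}} M_{b_j} ... M_{b_1'} U_{a[p+1:s_1']}
  for the remaining scheduler entries S and outputs b, where p is the previous
  scheduler entry; the full operator is V_aux with p = 0.\<close>
fun V_aux :: "nat \<Rightarrow> ('s \<Rightarrow> complex mat) \<Rightarrow> ('g \<Rightarrow> complex mat) \<Rightarrow> 's list
    \<Rightarrow> nat \<Rightarrow> nat list \<Rightarrow> 'g list \<Rightarrow> complex mat" where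
  "V_aux d U M a p [] [] = U_word d U (drop p a)"
| "V_aux d U M a p (s # S) (g # b) =
     V_aux d U M a s S b * M g * U_word d U (take (s - p) (drop p a))"
| "V_aux d U M a p _ _ = undefined"

definition V_op :: "nat \<Rightarrow> ('s \<Rightarrow> complex mat) \<Rightarrow> ('g \<Rightarrow> complex mat) \<Rightarrow> 's list
    \<Rightarrow> nat list \<Rightarrow> 'g list \<Rightarrow> complex mat" where
  "V_op d U M a S b = V_aux d U M a 0 S b"

definition schedulers :: "'s list \<Rightarrow> nat list set" where
  "schedulers a = {S. sorted S \<and> set S \<subseteq> {0..length a}}"

definition D_set :: "nat \<Rightarrow> ('s \<Rightarrow> complex mat) \<Rightarrow> ('g \<Rightarrow> complex mat)
    \<Rightarrow> nat \<Rightarrow> complex mat \<Rightarrow> nat \<Rightarrow> complex mat set" where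
  "D_set d U M k \<rho> m =
     {V_op d U M a S b * \<rho> * mat_adjoint (V_op d U M a S b) | a S b.
        S \<in> schedulers a \<and> length b = length S \<and>
        length a + length S \<le> m \<and> length S \<le> k}"

definition op_span :: "nat \<Rightarrow> complex mat set \<Rightarrow> complex mat set" where
  "op_span d X = LinearCombinations.module.span class_ring (module_mat TYPE(complex) d d) X"

definition is_QMM :: "nat \<Rightarrow> ('s::finite \<Rightarrow> complex mat) \<Rightarrow> ('g::finite \<Rightarrow> complex mat) \<Rightarrow> bool" where
  "is_QMM d U M \<longleftrightarrow>
     (\<forall>\<sigma>. U \<sigma> \<in> carrier_mat d d \<and> mat_adjoint (U \<sigma>) * U \<sigma> = 1\<^sub>m d \<and> U \<sigma> * mat_adjoint (U \<sigma>) = 1\<^sub>m d) \<and>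
     (\<forall>\<gamma>. M \<gamma> \<in> carrier_mat d d) \<and>
     finsum (module_mat TYPE(complex) d d) (\<lambda>\<gamma>. mat_adjoint (M \<gamma>) * M \<gamma>) UNIV = 1\<^sub>m d"

end

theory Submission
  imports Defs
begin

lemma adj_dims[simp]: "dim_row (mat_adjoint A) = dim_col A" "dim_col (mat_adjoint A) = dim_row A"
  unfolding mat_adjoint_def by auto

lemma adj_index: "i < dim_col A \<Longrightarrow> j < dim_row A \<Longrightarrow> mat_adjoint A $$ (i,j) = conjugate (A $$ (j,i))"
  unfolding mat_adjoint_def by (simp add: mat_of_rows_index)

lemma adj_carrier: "A \<in> carrier_mat n n \<Longrightarrow> mat_adjoint A \<in> carrier_mat n n"
  by (rule carrier_matI) (auto dest: carrier_matD)

lemma adj_mult: fixes A B :: "complex mat"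
  assumes A: "A \<in> carrier_mat n n" and B: "B \<in> carrier_mat n n"
  shows "mat_adjoint (A * B) = mat_adjoint B * mat_adjoint A"
proof (rule eq_matI)
  have dA: "dim_row A = n" "dim_col A = n" using A by auto
  have dB: "dim_row B = n" "dim_col B = n" using B by auto
  fix i j assume ij: "i < dim_row (mat_adjoint B * mat_adjoint A)" "j < dim_col (mat_adjoint B * mat_adjoint A)"
  then have i: "i < n" and j: "j < n" using dA dB by auto
  have "mat_adjoint (A * B) $$ (i, j) = conjugate ((A*B) $$ (j,i))"
    using dA dB i j by (simp add: adj_index)
  also have "\<dots> = cnj (\<Sum>k<n. A $$ (j,k) * B $$ (k,i))"
    using dA dB i j by (simp add: scalar_prod_def atLeast0LessThan)
  also have "\<dots> = (\<Sum>k<n. cnj (B $$ (k,i)) * cnj (A $$ (j,k)))"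
    by (simp add: mult.commute)
  also have "\<dots> = (mat_adjoint B * mat_adjoint A) $$ (i, j)"
    using dA dB i j by (simp add: adj_index scalar_prod_def atLeast0LessThan)
  finally show "mat_adjoint (A * B) $$ (i, j) = (mat_adjoint B * mat_adjoint A) $$ (i, j)" .
next
  show "dim_row (mat_adjoint (A * B)) = dim_row (mat_adjoint B * mat_adjoint A)" by simp
next
  show "dim_col (mat_adjoint (A * B)) = dim_col (mat_adjoint B * mat_adjoint A)" by simp
qed

lemma mult_assoc4: fixes A B C :: "complex mat"
  assumes "A \<in> carrier_mat n n" "B \<in> carrier_mat n n" "C \<in> carrier_mat n n"
  shows "A * B * C = A * (B * C)"
  using assms by (rule assoc_mult_mat)

lemma U_word_carrier: "(\<And>s. U s \<in> carrier_mat d d) \<Longrightarrow> U_word d U a \<in> carrier_mat d d"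
  by (induction a) auto

lemma U_word_snoc:
  assumes Uc: "\<And>s. U s \<in> carrier_mat d d"
  shows "U_word d U (a @ [\<sigma>]) = U \<sigma> * U_word d U a"
proof (induction a)
  case Nil
  then show ?case using Uc[of \<sigma>] by simp
next
  case (Cons x a)
  have "U_word d U ((x # a) @ [\<sigma>]) = U \<sigma> * U_word d U a * U x"
    using Cons by simp
  also have "\<dots> = U \<sigma> * (U_word d U a * U x)"
    by (rule mult_assoc4[OF Uc U_word_carrier[of U d, OF Uc] Uc])
  finally show ?case by simp
qed

lemma V_aux_carrier:
  assumes Uc: "\<And>s. U s \<in> carrier_mat d d" and Mc: "\<And>g. M g \<in> carrier_mat d d"
  shows "length b = length S \<Longrightarrow> V_aux d U M a p S b \<in> carrier_mat d d"
proof (induction S arbitrary: p b)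
  case Nil
  then show ?case using U_word_carrier[OF Uc] by simp
next
  case (Cons s S)
  then obtain g b' where b: "b = g # b'" "length b' = length S" by (cases b) auto
  show ?case unfolding b(1) V_aux.simps
    by (intro mult_carrier_mat[of _ d d _ d] Cons.IH[OF b(2)] Mc U_word_carrier[of U d, OF Uc])
qed

lemma V_aux_snocU:
  assumes Uc: "\<And>s. U s \<in> carrier_mat d d" and Mc: "\<And>g. M g \<in> carrier_mat d d"
  shows "length b = length S \<Longrightarrow> \<forall>x\<in>set S. x \<le> length a \<Longrightarrow> p \<le> length a \<Longrightarrow>
    V_aux d U M (a @ [\<sigma>]) p S b = U \<sigma> * V_aux d U M a p S b"
proof (induction S arbitrary: p b)
  case Nil
  then show ?case using U_word_snoc[OF Uc] by simp
next
  case (Cons s S)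
  then obtain g b' where b: "b = g # b'" "length b' = length S" by (cases b) auto
  have s: "s \<le> length a" using Cons.prems by simp
  have tk: "take (s - p) (drop p (a @ [\<sigma>])) = take (s - p) (drop p a)"
    using s Cons.prems(3) by simp
  have IH: "V_aux d U M (a @ [\<sigma>]) s S b' = U \<sigma> * V_aux d U M a s S b'"
    using Cons.IH[OF b(2)] Cons.prems s by simp
  have c1: "V_aux d U M a s S b' \<in> carrier_mat d d" using V_aux_carrier[OF Uc Mc b(2)] .
  have c2: "U_word d U (take (s - p) (drop p a)) \<in> carrier_mat d d" using U_word_carrier[of U d, OF Uc] .
  have "V_aux d U M (a @ [\<sigma>]) p (s # S) b = V_aux d U M (a @ [\<sigma>]) s S b' * M g * U_word d U (take (s - p) (drop p (a @ [\<sigma>])))"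
    by (simp only: b(1) V_aux.simps)
  also have "\<dots> = U \<sigma> * V_aux d U M a s S b' * M g * U_word d U (take (s - p) (drop p a))"
    unfolding tk IH ..
  also have "\<dots> = U \<sigma> * (V_aux d U M a s S b' * M g * U_word d U (take (s - p) (drop p a)))"
    using Uc[of \<sigma>] c1 Mc[of g] c2 by (simp add: assoc_mult_mat[of _ d d _ d _ d])
  also have "\<dots> = U \<sigma> * V_aux d U M a p (s # S) b" using b(1) by simp
  finally show ?case .
qed

lemma V_aux_snocM:
  assumes Uc: "\<And>s. U s \<in> carrier_mat d d" and Mc: "\<And>g. M g \<in> carrier_mat d d"
  shows "length b = length S \<Longrightarrow>
    V_aux d U M a p (S @ [length a]) (b @ [g]) = M g * V_aux d U M a p S b"
proof (induction S arbitrary: p b)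
  case Nil
  then show ?case using Mc[of g] U_word_carrier[OF Uc] by simp
next
  case (Cons s S)
  then obtain g' b' where b: "b = g' # b'" "length b' = length S" by (cases b) auto
  have c1: "V_aux d U M a s S b' \<in> carrier_mat d d" using V_aux_carrier[OF Uc Mc b(2)] .
  have c2: "U_word d U (take (s - p) (drop p a)) \<in> carrier_mat d d" using U_word_carrier[of U d, OF Uc] .
  have "V_aux d U M a p ((s # S) @ [length a]) (b @ [g]) = M g * V_aux d U M a s S b' * M g' * U_word d U (take (s - p) (drop p a))"
    using b Cons.IH[OF b(2)] by simp
  also have "\<dots> = M g * (V_aux d U M a s S b' * M g' * U_word d U (take (s - p) (drop p a)))"
    using Mc[of g] c1 Mc[of g'] c2 by (simp add: assoc_mult_mat[of _ d d _ d _ d])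
  also have "\<dots> = M g * V_aux d U M a p (s # S) b" using b(1) by simp
  finally show ?case .
qed

lemma conj_mult: fixes W V \<rho> :: "complex mat"
  assumes W: "W \<in> carrier_mat d d" and V: "V \<in> carrier_mat d d" and r: "\<rho> \<in> carrier_mat d d"
  shows "W * V * \<rho> * mat_adjoint (W * V) = W * (V * \<rho> * mat_adjoint V) * mat_adjoint W"
proof -
  have aW: "mat_adjoint W \<in> carrier_mat d d" using W by (rule adj_carrier)
  have aV: "mat_adjoint V \<in> carrier_mat d d" using V by (rule adj_carrier)
  have "W * V * \<rho> * mat_adjoint (W * V) = W * V * \<rho> * (mat_adjoint V * mat_adjoint W)"
    using adj_mult[OF W V] by simp
  also have "\<dots> = W * (V * \<rho> * mat_adjoint V) * mat_adjoint W"
    using W V r aW aV by (simp add: assoc_mult_mat[of _ d d _ d _ d])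
  finally show ?thesis .
qed

definition Rset :: "('s \<Rightarrow> complex mat) \<Rightarrow> ('g \<Rightarrow> complex mat) \<Rightarrow> nat \<Rightarrow> complex mat set \<Rightarrow> complex mat set \<Rightarrow> complex mat set" where
  "Rset U M l X Y = X \<union> (\<Union>\<sigma>. (\<lambda>x. U \<sigma> * x * mat_adjoint (U \<sigma>)) ` X) \<union>
     (if 0 < l then (\<Union>g. (\<lambda>x. M g * x * mat_adjoint (M g)) ` Y) else {})"

lemma D_mono: "D_set d U M l \<rho> n \<subseteq> D_set d U M l \<rho> (Suc n)"
  unfolding D_set_def by fastforce

lemma V_op_carrier:
  assumes Uc: "\<And>s. U s \<in> carrier_mat d d" and Mc: "\<And>g. M g \<in> carrier_mat d d"
  shows "length b = length S \<Longrightarrow> V_op d U M a S b \<in> carrier_mat d d"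
  unfolding V_op_def by (rule V_aux_carrier[OF Uc Mc])

lemma D_U:
  assumes Uc: "\<And>s. U s \<in> carrier_mat d d" and Mc: "\<And>g. M g \<in> carrier_mat d d"
    and r: "\<rho> \<in> carrier_mat d d"
    and y: "y \<in> D_set d U M l \<rho> n"
  shows "U \<sigma> * y * mat_adjoint (U \<sigma>) \<in> D_set d U M l \<rho> (Suc n)"
proof -
  obtain a S b where yd: "y = V_op d U M a S b * \<rho> * mat_adjoint (V_op d U M a S b)"
    and Ss: "S \<in> schedulers a" and lb: "length b = length S"
    and sz: "length a + length S \<le> n" and lS: "length S \<le> l"
    using y unfolding D_set_def by blast
  have Sle: "\<forall>x\<in>set S. x \<le> length a" using Ss unfolding schedulers_def by auto
  have Ss': "S \<in> schedulers (a @ [\<sigma>])" using Ss unfolding schedulers_def by auto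
  have V: "V_op d U M (a @ [\<sigma>]) S b = U \<sigma> * V_op d U M a S b"
    unfolding V_op_def using V_aux_snocU[of U d M, OF Uc Mc lb Sle] by simp
  have "U \<sigma> * y * mat_adjoint (U \<sigma>) = V_op d U M (a @ [\<sigma>]) S b * \<rho> * mat_adjoint (V_op d U M (a @ [\<sigma>]) S b)"
    unfolding V yd using conj_mult[OF Uc V_op_carrier[of U d M, OF Uc Mc lb] r] by simp
  moreover have "length (a @ [\<sigma>]) + length S \<le> Suc n" using sz by simp
  ultimately show ?thesis unfolding D_set_def using Ss' lb lS by blast
qed

lemma D_M:
  assumes Uc: "\<And>s. U s \<in> carrier_mat d d" and Mc: "\<And>g. M g \<in> carrier_mat d d"
    and r: "\<rho> \<in> carrier_mat d d"
    and y: "y \<in> D_set d U M (l - 1) \<rho> n" and l: "0 < l"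
  shows "M g * y * mat_adjoint (M g) \<in> D_set d U M l \<rho> (Suc n)"
proof -
  obtain a S b where yd: "y = V_op d U M a S b * \<rho> * mat_adjoint (V_op d U M a S b)"
    and Ss: "S \<in> schedulers a" and lb: "length b = length S"
    and sz: "length a + length S \<le> n" and lS: "length S \<le> l - 1"
    using y unfolding D_set_def by blast
  have Ss': "S @ [length a] \<in> schedulers a" using Ss unfolding schedulers_def
    by (auto simp: sorted_append)
  have V: "V_op d U M a (S @ [length a]) (b @ [g]) = M g * V_op d U M a S b"
    unfolding V_op_def using V_aux_snocM[of U d M, OF Uc Mc lb] by simp
  have "M g * y * mat_adjoint (M g) = V_op d U M a (S @ [length a]) (b @ [g]) * \<rho> * mat_adjoint (V_op d U M a (S @ [length a]) (b @ [g]))"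
    unfolding V yd using conj_mult[OF Mc V_op_carrier[of U d M, OF Uc Mc lb] r] by simp
  moreover have "length a + length (S @ [length a]) \<le> Suc n" using sz by simp
  moreover have "length (S @ [length a]) \<le> l" using lS l by simp
  moreover have "length (b @ [g]) = length (S @ [length a])" using lb by simp
  ultimately show ?thesis unfolding D_set_def using Ss' by blast
qed

lemma D_split:
  assumes Uc: "\<And>s. U s \<in> carrier_mat d d" and Mc: "\<And>g. M g \<in> carrier_mat d d"
    and r: "\<rho> \<in> carrier_mat d d"
    and x: "x \<in> D_set d U M l \<rho> (Suc n)"
  shows "x \<in> Rset U M l (D_set d U M l \<rho> n) (D_set d U M (l - 1) \<rho> n)"
proof -
  obtain a S b where xd: "x = V_op d U M a S b * \<rho> * mat_adjoint (V_op d U M a S b)"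
    and Ss: "S \<in> schedulers a" and lb: "length b = length S"
    and sz: "length a + length S \<le> Suc n" and lS: "length S \<le> l"
    using x unfolding D_set_def by blast
  show ?thesis
  proof (cases "length a + length S \<le> n")
    case True
    then have "x \<in> D_set d U M l \<rho> n" unfolding D_set_def using xd Ss lb lS by blast
    then show ?thesis unfolding Rset_def by blast
  next
    case False
    then have sz': "length a + length S = Suc n" using sz by simp
    have srt: "sorted S" and Sle: "\<forall>x\<in>set S. x \<le> length a" using Ss unfolding schedulers_def by auto
    consider (meas) S' b' g where "S = S' @ [length a]" "b = b' @ [g]"
      | (uni) "\<forall>x\<in>set S. x < length a"
    proof (cases S rule: rev_exhaust)
      case Nil
      then show ?thesis using that(2) by simp
    next
      case (snoc S' s)
      show ?thesis
      proof (cases "s = length a")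
        case True
        from lb snoc obtain b' g where "b = b' @ [g]" by (cases b rule: rev_exhaust) auto
        then show ?thesis using that(1) snoc True by blast
      next
        case False
        then have "s < length a" using Sle snoc by auto
        moreover have "\<forall>y\<in>set S'. y \<le> s" using srt snoc by (simp add: sorted_append)
        ultimately have "\<forall>x\<in>set S. x < length a" using snoc by fastforce
        then show ?thesis by (rule that(2))
      qed
    qed
    then show ?thesis
    proof cases
      case meas
      have lb': "length b' = length S'" using lb meas by simp
      have Ss': "S' \<in> schedulers a" using Ss meas unfolding schedulers_def by (auto simp: sorted_append)
      have V: "V_op d U M a S b = M g * V_op d U M a S' b'"
        unfolding V_op_def meas using V_aux_snocM[of U d M, OF Uc Mc lb'] by simp
      define y where "y = V_op d U M a S' b' * \<rho> * mat_adjoint (V_op d U M a S' b')"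
      have l: "0 < l" using lS meas by simp
      have "y \<in> D_set d U M (l - 1) \<rho> n"
        unfolding D_set_def y_def using Ss' lb' sz' lS meas by fastforce
      moreover have "x = M g * y * mat_adjoint (M g)"
        unfolding xd V y_def using conj_mult[OF Mc V_op_carrier[of U d M, OF Uc Mc lb'] r] by simp
      ultimately show ?thesis unfolding Rset_def using l by auto
    next
      case uni
      have "a \<noteq> []"
      proof
        assume "a = []"
        then have "S = []" using uni by (cases S) auto
        then show False using sz' \<open>a = []\<close> by simp
      qed
      then obtain a' \<sigma> where a: "a = a' @ [\<sigma>]" by (cases a rule: rev_exhaust) auto
      have Sle': "\<forall>x\<in>set S. x \<le> length a'" using uni a by auto
      have Ss': "S \<in> schedulers a'" using srt Sle' unfolding schedulers_def by auto
      have V: "V_op d U M a S b = U \<sigma> * V_op d U M a' S b"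
        unfolding V_op_def a using V_aux_snocU[of U d M, OF Uc Mc lb Sle'] by simp
      define y where "y = V_op d U M a' S b * \<rho> * mat_adjoint (V_op d U M a' S b)"
      have "y \<in> D_set d U M l \<rho> n"
        unfolding D_set_def y_def using Ss' lb sz' lS a by fastforce
      moreover have "x = U \<sigma> * y * mat_adjoint (U \<sigma>)"
        unfolding xd V y_def using conj_mult[OF Uc V_op_carrier[of U d M, OF Uc Mc lb] r] by simp
      ultimately show ?thesis unfolding Rset_def by auto
    qed
  qed
qed

lemma D_step:
  assumes Uc: "\<And>s. U s \<in> carrier_mat d d" and Mc: "\<And>g. M g \<in> carrier_mat d d"
    and r: "\<rho> \<in> carrier_mat d d"
  shows "D_set d U M l \<rho> (Suc n) = Rset U M l (D_set d U M l \<rho> n) (D_set d U M (l - 1) \<rho> n)"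
proof
  show "D_set d U M l \<rho> (Suc n) \<subseteq> Rset U M l (D_set d U M l \<rho> n) (D_set d U M (l - 1) \<rho> n)"
    using D_split[of U d M, OF Uc Mc r] by blast
  show "Rset U M l (D_set d U M l \<rho> n) (D_set d U M (l - 1) \<rho> n) \<subseteq> D_set d U M l \<rho> (Suc n)"
    unfolding Rset_def using D_mono[THEN subsetD] D_U[of U d M, OF Uc Mc r] D_M[of U d M, OF Uc Mc r]
    by (auto split: if_splits)
qed

lemma D_carrier:
  assumes Uc: "\<And>s. U s \<in> carrier_mat d d" and Mc: "\<And>g. M g \<in> carrier_mat d d"
    and r: "\<rho> \<in> carrier_mat d d"
  shows "D_set d U M l \<rho> n \<subseteq> carrier_mat d d"
proof
  fix x assume "x \<in> D_set d U M l \<rho> n"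
  then obtain a S b where xd: "x = V_op d U M a S b * \<rho> * mat_adjoint (V_op d U M a S b)"
    and lb: "length b = length S" unfolding D_set_def by blast
  have V: "V_op d U M a S b \<in> carrier_mat d d" by (rule V_op_carrier[of U d M, OF Uc Mc lb])
  show "x \<in> carrier_mat d d" unfolding xd
    by (intro mult_carrier_mat[of _ d d _ d] V r adj_carrier)
qed

lemma VV_module: "Module.module class_ring (module_mat TYPE(complex) d d)"
  by (rule vectorspace.axioms(1)[OF matrix_vs])

lemma span_conj:
  fixes A B :: "complex mat"
  assumes A: "A \<in> carrier_mat d d" and B: "B \<in> carrier_mat d d" and X: "X \<subseteq> carrier_mat d d"
  shows "(\<lambda>x. A * x * B) ` op_span d X \<subseteq> op_span d ((\<lambda>x. A * x * B) ` X)"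
proof -
  interpret V: vectorspace class_ring "module_mat TYPE(complex) d d" by (rule matrix_vs)
  let ?f = "\<lambda>x. A * x * B"
  have fX: "?f ` X \<subseteq> carrier_mat d d" using A B X by (auto intro!: mult_carrier_mat[of _ d d _ d])
  have sub: "submodule class_ring (op_span d (?f ` X)) (module_mat TYPE(complex) d d)"
    unfolding op_span_def by (rule V.span_is_submodule) (use fX in \<open>simp add: module_mat_simps\<close>)
  define N where "N = {v \<in> carrier_mat d d. ?f v \<in> op_span d (?f ` X)}"
  have subN: "submodule class_ring N (module_mat TYPE(complex) d d)"
  proof (rule submodule.intro)
    show "Module.module class_ring (module_mat TYPE(complex) d d)" by (rule VV_module)
    show "N \<subseteq> carrier (module_mat TYPE(complex) d d)" unfolding N_def by (auto simp: module_mat_simps)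
  next
    fix v w assume v: "v \<in> N" and w: "w \<in> N"
    then have vc: "v \<in> carrier_mat d d" and wc: "w \<in> carrier_mat d d" unfolding N_def by auto
    have "?f (v + w) = ?f v + ?f w"
      using A B vc wc by (simp add: mult_add_distrib_mat[of _ d d _ d] add_mult_distrib_mat[of _ d d _ _ d])
    moreover have "?f v + ?f w \<in> op_span d (?f ` X)"
      using submodule.m_closed[OF sub, of "?f v" "?f w"] v w unfolding N_def by (simp add: module_mat_simps)
    ultimately show "v \<oplus>\<^bsub>module_mat TYPE(complex) d d\<^esub> w \<in> N"
      unfolding N_def using vc wc by (simp add: module_mat_simps)
  next
    have "?f (0\<^sub>m d d) = 0\<^sub>m d d" using A B by simp
    moreover have "0\<^sub>m d d \<in> op_span d (?f ` X)"
      using submodule.zero_closed[OF sub] by (simp add: module_mat_simps)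
    ultimately show "\<zero>\<^bsub>module_mat TYPE(complex) d d\<^esub> \<in> N"
      unfolding N_def by (simp add: module_mat_simps)
  next
    fix c :: complex and v assume c: "c \<in> carrier class_ring" and v: "v \<in> N"
    then have vc: "v \<in> carrier_mat d d" unfolding N_def by auto
    have "?f (c \<cdot>\<^sub>m v) = c \<cdot>\<^sub>m ?f v"
      using A B vc by (simp add: mult_smult_distrib[of _ d d _ d] mult_smult_assoc_mat[of _ d d _ d])
    moreover have "c \<cdot>\<^sub>m ?f v \<in> op_span d (?f ` X)"
      using submodule.smult_closed[OF sub, of c "?f v"] c v unfolding N_def by (simp add: module_mat_simps)
    ultimately show "c \<odot>\<^bsub>module_mat TYPE(complex) d d\<^esub> v \<in> N"
      unfolding N_def using vc by (simp add: module_mat_simps)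
  qed
  have XN: "X \<subseteq> N"
  proof
    fix x assume x: "x \<in> X"
    have "?f ` X \<subseteq> op_span d (?f ` X)"
      unfolding op_span_def by (rule V.in_own_span) (use fX in \<open>simp add: module_mat_simps\<close>)
    then show "x \<in> N" unfolding N_def using x X by auto
  qed
  have "op_span d X \<subseteq> N" unfolding op_span_def by (rule V.span_is_subset[OF XN subN])
  then show ?thesis unfolding N_def by auto
qed

lemma Rset_carrier:
  assumes Uc: "\<And>s. U s \<in> carrier_mat d d" and Mc: "\<And>g. M g \<in> carrier_mat d d"
    and X: "X \<subseteq> carrier_mat d d" and Y: "Y \<subseteq> carrier_mat d d"
  shows "Rset U M l X Y \<subseteq> carrier_mat d d"
proof -
  have c: "\<And>W x. W \<in> carrier_mat d d \<Longrightarrow> x \<in> carrier_mat d d \<Longrightarrow> W * x * mat_adjoint W \<in> carrier_mat d d"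
    by (intro mult_carrier_mat[of _ d d _ d] adj_carrier) auto
  show ?thesis unfolding Rset_def using X Y c[OF Uc] c[OF Mc] by auto
qed

lemma Rset_mono: "X \<subseteq> X' \<Longrightarrow> Y \<subseteq> Y' \<Longrightarrow> Rset U M l X Y \<subseteq> Rset U M l X' Y'"
  unfolding Rset_def by (intro Un_mono UN_mono image_mono order_refl) (auto split: if_splits)

lemma span_Rset:
  assumes Uc: "\<And>s. U s \<in> carrier_mat d d" and Mc: "\<And>g. M g \<in> carrier_mat d d"
    and X: "X \<subseteq> carrier_mat d d" and Y: "Y \<subseteq> carrier_mat d d"
  shows "op_span d (Rset U M l (op_span d X) (op_span d Y)) = op_span d (Rset U M l X Y)"
proof -
  interpret V: vectorspace class_ring "module_mat TYPE(complex) d d" by (rule matrix_vs)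
  have RX: "Rset U M l X Y \<subseteq> carrier_mat d d" by (rule Rset_carrier[of U d M, OF Uc Mc X Y])
  have sub: "submodule class_ring (op_span d (Rset U M l X Y)) (module_mat TYPE(complex) d d)"
    unfolding op_span_def by (rule V.span_is_submodule) (use RX in \<open>simp add: module_mat_simps\<close>)
  have XsX: "X \<subseteq> op_span d X"
    unfolding op_span_def by (rule V.in_own_span) (use X in \<open>simp add: module_mat_simps\<close>)
  have YsY: "Y \<subseteq> op_span d Y"
    unfolding op_span_def by (rule V.in_own_span) (use Y in \<open>simp add: module_mat_simps\<close>)
  have mono: "\<And>A B. A \<subseteq> B \<Longrightarrow> op_span d A \<subseteq> op_span d B"
    unfolding op_span_def by (rule V.span_is_monotone)
  have "Rset U M l X Y \<subseteq> Rset U M l (op_span d X) (op_span d Y)"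
    using XsX YsY by (rule Rset_mono)
  then have 1: "op_span d (Rset U M l X Y) \<subseteq> op_span d (Rset U M l (op_span d X) (op_span d Y))"
    by (rule mono)
  have "Rset U M l (op_span d X) (op_span d Y) \<subseteq> op_span d (Rset U M l X Y)"
  proof -
    have a: "op_span d X \<subseteq> op_span d (Rset U M l X Y)" by (rule mono) (unfold Rset_def, blast)
    have b: "(\<lambda>x. U \<sigma> * x * mat_adjoint (U \<sigma>)) ` op_span d X \<subseteq> op_span d (Rset U M l X Y)" for \<sigma>
    proof -
      have "(\<lambda>x. U \<sigma> * x * mat_adjoint (U \<sigma>)) ` op_span d X \<subseteq> op_span d ((\<lambda>x. U \<sigma> * x * mat_adjoint (U \<sigma>)) ` X)"
        by (rule span_conj[OF Uc adj_carrier[OF Uc] X])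
      also have "\<dots> \<subseteq> op_span d (Rset U M l X Y)" by (rule mono) (unfold Rset_def, blast)
      finally show ?thesis .
    qed
    have c: "0 < l \<Longrightarrow> (\<lambda>x. M g * x * mat_adjoint (M g)) ` op_span d Y \<subseteq> op_span d (Rset U M l X Y)" for g
    proof -
      assume l: "0 < l"
      have "(\<lambda>x. M g * x * mat_adjoint (M g)) ` op_span d Y \<subseteq> op_span d ((\<lambda>x. M g * x * mat_adjoint (M g)) ` Y)"
        by (rule span_conj[OF Mc adj_carrier[OF Mc] Y])
      also have "\<dots> \<subseteq> op_span d (Rset U M l X Y)" by (rule mono) (use l in \<open>unfold Rset_def, simp, blast\<close>)
      finally show ?thesis .
    qed
    have b': "(\<Union>\<sigma>. (\<lambda>x. U \<sigma> * x * mat_adjoint (U \<sigma>)) ` op_span d X) \<subseteq> op_span d (Rset U M l X Y)"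
      using b by (rule UN_least)
    have c': "(if 0 < l then (\<Union>g. (\<lambda>x. M g * x * mat_adjoint (M g)) ` op_span d Y) else {}) \<subseteq> op_span d (Rset U M l X Y)"
      using c by (cases "0 < l") (simp_all add: UN_least)
    show ?thesis unfolding Rset_def[of U M l "op_span d X"] using a b' c' by (intro Un_least)
  qed
  then have 2: "op_span d (Rset U M l (op_span d X) (op_span d Y)) \<subseteq> op_span d (Rset U M l X Y)"
    unfolding op_span_def by (rule V.span_is_subset[OF _ sub[unfolded op_span_def]])
  from 1 2 show ?thesis by blast
qed

theorem lemma1:
  fixes d :: nat
    and U :: "'s::finite \<Rightarrow> complex mat"
    and M :: "'g::finite \<Rightarrow> complex mat"
    and \<rho> :: "complex mat"
    and m k :: nat
  assumes "is_QMM d U M"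
    and "\<rho> \<in> carrier_mat d d" and "mat_adjoint \<rho> = \<rho>"
    and "\<forall>l\<le>k. op_span d (D_set d U M l \<rho> m) = op_span d (D_set d U M l \<rho> (m + 1))"
  shows "\<forall>l\<le>k. \<forall>\<delta>::nat. op_span d (D_set d U M l \<rho> m) = op_span d (D_set d U M l \<rho> (m + \<delta>))"
proof -
  have Uc: "\<And>s. U s \<in> carrier_mat d d" and Mc: "\<And>g. M g \<in> carrier_mat d d"
    using assms(1) unfolding is_QMM_def by auto
  have r: "\<rho> \<in> carrier_mat d d" by (rule assms(2))
  have step: "op_span d (D_set d U M l \<rho> (Suc n)) =
      op_span d (Rset U M l (op_span d (D_set d U M l \<rho> n)) (op_span d (D_set d U M (l - 1) \<rho> n)))" for l n
    unfolding D_step[of U d M, OF Uc Mc r]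
    using span_Rset[of U d M, OF Uc Mc D_carrier[of U d M, OF Uc Mc r] D_carrier[of U d M, OF Uc Mc r]]
    by simp
  have main: "\<forall>l\<le>k. op_span d (D_set d U M l \<rho> (m + \<delta>)) = op_span d (D_set d U M l \<rho> m)" for \<delta>
  proof (induction \<delta>)
    case 0
    then show ?case by simp
  next
    case (Suc \<delta>)
    show ?case
    proof (intro allI impI)
      fix l assume l: "l \<le> k"
      have l1: "l - 1 \<le> k" using l by simp
      have "op_span d (D_set d U M l \<rho> (m + Suc \<delta>)) =
          op_span d (Rset U M l (op_span d (D_set d U M l \<rho> (m + \<delta>))) (op_span d (D_set d U M (l - 1) \<rho> (m + \<delta>))))"
        using step[of l "m + \<delta>"] by simp
      also have "\<dots> = op_span d (Rset U M l (op_span d (D_set d U M l \<rho> m)) (op_span d (D_set d U M (l - 1) \<rho> m)))"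
        using Suc.IH l l1 by simp
      also have "\<dots> = op_span d (D_set d U M l \<rho> (Suc m))"
        using step[of l m] by simp
      also have "\<dots> = op_span d (D_set d U M l \<rho> m)"
        using assms(4) l by simp
      finally show "op_span d (D_set d U M l \<rho> (m + Suc \<delta>)) = op_span d (D_set d U M l \<rho> m)" .
    qed
  qed
  then show ?thesis by simp
qed

end
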